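(* Let $\mathcal{G}=(\Gamma,G)$ be a locally finite nonsingular graph of countable groups, and let $\{u_x,s_e\}$ be the universal $\mathcal{G}$-family generating $C^*(\mathcal{G})$, with $s_{ge}:=u_{r(e),g}s_e$. Let $e,f\in\Gamma^1$, $g\in\Sigma_e$ and $h\in\Sigma_f$. Then $s_{ge}^*s_{hf}=\delta_{ge,hf}\,s_e^*s_e$ and $s_e^*s_es_{hf}=\delta_{r(f),s(e)}(1-\delta_{hf,1\bar e})\,s_{hf}$, where $\delta_{ge,hf}=1$ if $e=f$ and $g=h$ and $0$ otherwise, $\delta_{hf,1\bar e}=1$ if $f=\bar e$ and $h=1$ and $0$ otherwise, and $\delta_{r(f),s(e)}=1$ if $r(f)=s(e)$ and $0$ otherwise.
   Context: Graph of groups: connected graph $\Gamma$ (countable vertices/edges, $r,s$, involution $e\mapsto\bar e$, $\bar e\ne e$, $r(e)=s(\bar e)$), groups $G_x$, $G_e=G_{\bar e}$, injective $\alpha_e:G_e\to G_{r(e)}$; locally finite: each $r^{-1}(v)$ finite, finite-index images; nonsingular: $\alpha_e$ not surjective whenever $r^{-1}(r(e))=\{e\}$. Transversals $\Sigma_e\subseteq G_{r(e)}$ of $G_{r(e)}/\alpha_e(G_e)$ with $1\in\Sigma_e$. $C^*(\mathcal{G})$ is the universal $C^*$-algebra generated by partial isometries $s_e$ ($e\in\Gamma^1$) and partial unitary representations $g\mapsto u_{x,g}$ of $G_x$ ($u_{x,gh}=u_{x,g}u_{x,h}$, $u_{x,g^{-1}}=u_{x,g}^*$) with: (G1) $u_{x,1}u_{y,1}=0$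 for $x\ne y$; (G2) $u_{r(e),\alpha_e(g)}s_e=s_eu_{s(e),\alpha_{\bar e}(g)}$; (G3) $u_{s(e),1}=s_e^*s_e+s_{\bar e}s_{\bar e}^*$; (G4) $s_e^*s_e=\sum_{r(f)=s(e),\,\mu\in\Sigma_f,\,(\mu,f)\ne(1,\bar e)}u_{s(e),\mu}s_fs_f^*u_{s(e),\mu}^*$. *)

theory Defs
  imports Complex_Main "HOL-Algebra.Coset" "HOL-Library.Countable_Set"
begin

class cstar_algebra = real_normed_algebra + banach +
  fixes scaleC :: "complex \<Rightarrow> 'a \<Rightarrow> 'a"
    and invol :: "'a \<Rightarrow> 'a"
  assumes scaleC_of_real: "scaleC (complex_of_real r) x = scaleR r x"
    and scaleC_add_right: "scaleC c (x + y) = scaleC c x + scaleC c y"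
    and scaleC_add_left: "scaleC (c + d) x = scaleC c x + scaleC d x"
    and scaleC_scaleC: "scaleC c (scaleC d x) = scaleC (c * d) x"
    and scaleC_one: "scaleC 1 x = x"
    and mult_scaleC_left: "scaleC c x * y = scaleC c (x * y)"
    and mult_scaleC_right: "x * scaleC c y = scaleC c (x * y)"
    and norm_scaleC: "norm (scaleC c x) = cmod c * norm x"
    and invol_invol: "invol (invol x) = x"
    and invol_add: "invol (x + y) = invol x + invol y"
    and invol_mult: "invol (x * y) = invol y * invol x"
    and invol_scaleC: "invol (scaleC c x) = scaleC (cnj c) (invol x)"
    and cstar_identity: "norm (invol x * x) = norm x ^ 2"

text \<open>Vertices are the elements of type 'v, edges the elements of type 'e.
G x is the vertex group at x, H e the edge group G_e, alpha e the
monomorphism G_e \<rightarrow> G_{r(e)}.\<close>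

definition left_cosets :: "('g, 'm) monoid_scheme \<Rightarrow> 'g set \<Rightarrow> 'g set set" where
  "left_cosets Gr K = {a <#\<^bsub>Gr\<^esub> K | a. a \<in> carrier Gr}"

definition left_transversal :: "('g, 'm) monoid_scheme \<Rightarrow> 'g set \<Rightarrow> 'g set \<Rightarrow> bool" where
  "left_transversal Gr K T \<longleftrightarrow>
     T \<subseteq> carrier Gr \<and> (\<forall>a \<in> carrier Gr. \<exists>!t. t \<in> T \<and> t \<in> a <#\<^bsub>Gr\<^esub> K)"

definition graph_of_groups ::
  "('e \<Rightarrow> 'v) \<Rightarrow> ('e \<Rightarrow> 'v) \<Rightarrow> ('e \<Rightarrow> 'e) \<Rightarrow> ('v \<Rightarrow> 'g monoid) \<Rightarrow> ('e \<Rightarrow> 'h monoid)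
   \<Rightarrow> ('e \<Rightarrow> 'h \<Rightarrow> 'g) \<Rightarrow> bool" where
  "graph_of_groups r s bar G H alpha \<longleftrightarrow>
     countable (UNIV :: 'v set) \<and> countable (UNIV :: 'e set) \<and>
     (\<forall>e. bar (bar e) = e \<and> bar e \<noteq> e \<and> r e = s (bar e)) \<and>
     (\<forall>x y. (x, y) \<in> (range (\<lambda>e. (s e, r e)))\<^sup>*) \<and>
     (\<forall>x. group (G x) \<and> countable (carrier (G x))) \<and>
     (\<forall>e. group (H e) \<and> countable (carrier (H e)) \<and> H (bar e) = H e) \<and>
     (\<forall>e. alpha e \<in> hom (H e) (G (r e)) \<and> inj_on (alpha e) (carrier (H e)))"

definition locally_finite_gog ::
  "('e \<Rightarrow> 'v) \<Rightarrow> ('v \<Rightarrow> 'g monoid) \<Rightarrow> ('e \<Rightarrow> 'h monoid) \<Rightarrow> ('e \<Rightarrow> 'h \<Rightarrow> 'g) \<Rightarrow> bool" where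
  "locally_finite_gog r G H alpha \<longleftrightarrow>
     (\<forall>v. finite {e. r e = v}) \<and>
     (\<forall>e. finite (left_cosets (G (r e)) (alpha e ` carrier (H e))))"

definition nonsingular_gog ::
  "('e \<Rightarrow> 'v) \<Rightarrow> ('v \<Rightarrow> 'g monoid) \<Rightarrow> ('e \<Rightarrow> 'h monoid) \<Rightarrow> ('e \<Rightarrow> 'h \<Rightarrow> 'g) \<Rightarrow> bool" where
  "nonsingular_gog r G H alpha \<longleftrightarrow>
     (\<forall>e. {f. r f = r e} = {e} \<longrightarrow> alpha e ` carrier (H e) \<noteq> carrier (G (r e)))"

definition G_family ::
  "('e \<Rightarrow> 'v) \<Rightarrow> ('e \<Rightarrow> 'v) \<Rightarrow> ('e \<Rightarrow> 'e) \<Rightarrow> ('v \<Rightarrow> 'g monoid) \<Rightarrow> ('e \<Rightarrow> 'h monoid)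
   \<Rightarrow> ('e \<Rightarrow> 'h \<Rightarrow> 'g) \<Rightarrow> ('e \<Rightarrow> 'g set)
   \<Rightarrow> ('v \<Rightarrow> 'g \<Rightarrow> 'a::cstar_algebra) \<Rightarrow> ('e \<Rightarrow> 'a) \<Rightarrow> bool" where
  "G_family r s bar G H alpha Sig u sx \<longleftrightarrow>
     \<comment> \<open>partial isometries\<close>
     (\<forall>e. sx e * invol (sx e) * sx e = sx e) \<and>
     \<comment> \<open>partial unitary representations\<close>
     (\<forall>x. \<forall>g \<in> carrier (G x). \<forall>h \<in> carrier (G x).
        u x (g \<otimes>\<^bsub>G x\<^esub> h) = u x g * u x h) \<and>
     (\<forall>x. \<forall>g \<in> carrier (G x). u x (inv\<^bsub>G x\<^esub> g) = invol (u x g)) \<and>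
     \<comment> \<open>(G1)\<close>
     (\<forall>x y. x \<noteq> y \<longrightarrow> u x \<one>\<^bsub>G x\<^esub> * u y \<one>\<^bsub>G y\<^esub> = 0) \<and>
     \<comment> \<open>(G2)\<close>
     (\<forall>e. \<forall>g \<in> carrier (H e). u (r e) (alpha e g) * sx e = sx e * u (s e) (alpha (bar e) g)) \<and>
     \<comment> \<open>(G3)\<close>
     (\<forall>e. u (s e) \<one>\<^bsub>G (s e)\<^esub> = invol (sx e) * sx e + sx (bar e) * invol (sx (bar e))) \<and>
     \<comment> \<open>(G4)\<close>
     (\<forall>e. invol (sx e) * sx e =
        (\<Sum>(\<mu>, f) \<in> {(\<mu>, f). r f = s e \<and> \<mu> \<in> Sig f \<and> (\<mu>, f) \<noteq> (\<one>\<^bsub>G (s e)\<^esub>, bar e)}.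
           u (s e) \<mu> * sx f * invol (sx f) * invol (u (s e) \<mu>)))"

end

theory Submission
  imports Defs
begin


lemma invol_zero: "invol (0::'a::cstar_algebra) = 0"
proof -
  have "invol (0::'a) = invol 0 + invol 0" using invol_add[of "0::'a" 0] by simp
  then show ?thesis by simp
qed

lemma invol_minus: "invol (- x) = - invol (x::'a::cstar_algebra)"
proof -
  have "invol x + invol (-x) = 0" using invol_add[of x "-x"] by (simp add: invol_zero)
  then show ?thesis by (simp add: add_eq_0_iff)
qed

lemma invol_diff: "invol (x - y) = invol x - invol (y::'a::cstar_algebra)"
  using invol_add[of x "-y"] by (simp add: invol_minus)

lemma invol_scaleR: "invol (scaleR r x) = scaleR r (invol (x::'a::cstar_algebra))"
  by (metis scaleC_of_real invol_scaleC complex_cnj_complex_of_real)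

lemma invol_sum: "invol (sum f A) = sum (\<lambda>i. invol (f i :: 'a::cstar_algebra)) A"
  by (induction A rule: infinite_finite_induct) (auto simp: invol_zero invol_add)

lemma scaleC_zero_left: "scaleC 0 (x::'a::cstar_algebra) = 0"
  by (metis scaleC_of_real of_real_0 scaleR_zero_left)

lemma scaleC_zero_right: "scaleC c (0::'a::cstar_algebra) = 0"
  using scaleC_add_right[of c "0::'a" 0] by simp

lemma scaleC_sum_right: "scaleC c (sum f A) = sum (\<lambda>i. scaleC c (f i :: 'a::cstar_algebra)) A"
  by (induction A rule: infinite_finite_induct) (auto simp: scaleC_zero_right scaleC_add_right)

lemma scaleC_sum_left: "scaleC (sum f A) x = sum (\<lambda>i. scaleC (f i) (x :: 'a::cstar_algebra)) A"
  by (induction A rule: infinite_finite_induct) (auto simp: scaleC_zero_left scaleC_add_left)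

lemma norm_proj:
  assumes "P * P = P" "invol P = P"
  shows "norm (P::'a::cstar_algebra) \<le> 1"
proof -
  have "norm P ^ 2 = norm P" using cstar_identity[of P] assms by simp
  then have "norm P * (norm P - 1) = 0" by (simp add: power2_eq_square algebra_simps)
  then show ?thesis by auto
qed

lemma two_proj:
  assumes "P * P = P" "Q * Q = Q" "(P + Q) * (P + Q) = P + (Q::'a::cstar_algebra)"
  shows "P * Q = 0"
proof -
  have "(P + Q) * (P + Q) = P * P + P * Q + Q * P + Q * Q" by (simp add: distrib_left distrib_right)
  then have 1: "P * Q + Q * P = 0" using assms by simp
  have "P * (P * Q + Q * P) = P * Q + P * Q * P"
    by (simp add: distrib_left mult.assoc[symmetric] assms(1))
  then have 2: "P * Q + P * Q * P = 0" using 1 by simp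
  have "(P * Q + Q * P) * P = P * Q * P + Q * P"
    by (simp add: distrib_right mult.assoc assms(1))
  then have 3: "P * Q * P + Q * P = 0" using 1 by simp
  have "P * Q = Q * P" using 2 3 by (metis add_right_cancel add.commute)
  then have "P * Q + P * Q = 0" using 1 by simp
  then have "scaleR 2 (P * Q) = 0" by (simp add: scaleR_2)
  then show ?thesis by simp
qed


fun pw :: "'a \<Rightarrow> 'a \<Rightarrow> nat \<Rightarrow> 'a::cstar_algebra" where
  "pw P x 0 = P"
| "pw P x (Suc n) = x * pw P x n"

lemma pw_P: assumes "P * P = P" "P * x = x" shows "P * pw P x n = pw P x n"
  by (cases n) (simp_all add: assms mult.assoc[symmetric])

lemma pw_binom:
  assumes PP: "P * P = P" and Pa: "P * a = a"
  shows "pw P (P + a) n = (\<Sum>j\<le>n. scaleR (real (n choose j)) (pw P a j))"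
proof (induction n)
  case 0
  then show ?case by simp
next
  case (Suc n)
  have PA: "P * pw P a j = pw P a j" for j using pw_P[OF PP Pa] .
  have "pw P (P + a) (Suc n) = (P + a) * (\<Sum>j\<le>n. scaleR (real (n choose j)) (pw P a j))"
    using Suc by simp
  also have "\<dots> = (\<Sum>j\<le>n. scaleR (real (n choose j)) (pw P a j))
                 + (\<Sum>j\<le>n. scaleR (real (n choose j)) (pw P a (Suc j)))"
    by (simp add: distrib_right sum_distrib_left PA scaleR_add_right sum.distrib)
  also have "(\<Sum>j\<le>n. scaleR (real (n choose j)) (pw P a j))
       = (\<Sum>j\<le>Suc n. scaleR (real (n choose j)) (pw P a j))"
    by simp
  also have "\<dots> = P + (\<Sum>j\<le>n. scaleR (real (n choose Suc j)) (pw P a (Suc j)))"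
    by (subst sum.atMost_Suc_shift) simp
  also have "(\<Sum>j\<le>Suc n. scaleR (real (Suc n choose j)) (pw P a j))
       = P + (\<Sum>j\<le>n. scaleR (real (Suc n choose Suc j)) (pw P a (Suc j)))"
    by (subst sum.atMost_Suc_shift) simp
  moreover have "(\<Sum>j\<le>n. scaleR (real (Suc n choose Suc j)) (pw P a (Suc j)))
     = (\<Sum>j\<le>n. scaleR (real (n choose Suc j)) (pw P a (Suc j)))
       + (\<Sum>j\<le>n. scaleR (real (n choose j)) (pw P a (Suc j)))"
    by (simp add: sum.distrib[symmetric] scaleR_add_left[symmetric] add.commute)
  ultimately show ?case by (simp add: add.assoc)
qed

lemma pw_scaleC: "pw P (scaleC c h) j = scaleC (c ^ j) (pw P h j)"
  by (induction j) (simp_all add: scaleC_one mult_scaleC_left mult_scaleC_right scaleC_scaleC mult.commute)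

lemma pw_norm: assumes "norm P \<le> 1" "norm x \<le> 1" shows "norm (pw P x n) \<le> 1"
proof (induction n)
  case 0 then show ?case using assms by simp
next
  case (Suc n)
  have "norm (x * pw P x n) \<le> norm x * norm (pw P x n)" by (rule norm_mult_ineq)
  also have "\<dots> \<le> 1" using Suc assms by (simp add: mult_le_one)
  finally show ?case by simp
qed

lemma combo_id:
  fixes A B C :: "'b::real_vector"
  shows "scaleR ((1+t)/2) (A + scaleR 2 B + C) + scaleR ((1-t)/2) (A - scaleR 2 B + C)
         = A + scaleR (2*t) B + C"
proof -
  have "scaleR ((1+t)/2) (A + scaleR 2 B + C) + scaleR ((1-t)/2) (A - scaleR 2 B + C)
     = scaleR ((1+t)/2 + (1-t)/2) A + scaleR (2*((1+t)/2) - 2*((1-t)/2)) B + scaleR ((1+t)/2 + (1-t)/2) C"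
    by (simp add: scaleR_add_right scaleR_diff_right scaleR_add_left scaleR_diff_left algebra_simps)
  also have "\<dots> = A + scaleR (2*t) B + C" by (simp add: field_simps)
  finally show ?thesis .
qed

lemma rot_bound:
  fixes P h :: "'a::cstar_algebra"
  assumes PP: "P * P = P" and iP: "invol P = P" and ih: "invol h = h"
    and Ph: "P * h = h" and hP: "h * P = h"
    and n1: "norm (P + h) \<le> 1" and n2: "norm (P - h) \<le> 1"
    and w: "cmod w = 1"
  shows "norm (P + scaleC w h) \<le> 1"
proof -
  define x where "x = P + scaleC w h"
  define t where "t = Re w"
  have t1: "\<bar>t\<bar> \<le> 1" using abs_Re_le_cmod[of w] w by (simp add: t_def)
  have ix: "invol x = P + scaleC (cnj w) h" by (simp add: x_def invol_add invol_scaleC iP ih)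
  have cw: "w * cnj w = 1"
    by (metis complex_norm_square of_real_1 power_one w)
  have aw: "w + cnj w = complex_of_real (2 * t)" by (simp add: t_def complex_add_cnj)
  have "invol x * x = (P + scaleC (cnj w) h) * x" by (simp only: ix)
  also have "\<dots> = P * P + P * scaleC w h + scaleC (cnj w) h * P + scaleC (cnj w) h * scaleC w h"
    by (simp add: x_def distrib_left distrib_right add.assoc)
  also have "\<dots> = P + (scaleC w h + scaleC (cnj w) h) + h * h"
    by (simp add: PP Ph hP mult_scaleC_left mult_scaleC_right scaleC_scaleC cw scaleC_one add.assoc)
  also have "scaleC w h + scaleC (cnj w) h = scaleR (2 * t) h"
    by (simp only: scaleC_add_left[symmetric] aw scaleC_of_real)
  finally have e1: "invol x * x = P + scaleR (2 * t) h + h * h" .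
  have sq1: "(P + h) * (P + h) = P + scaleR 2 h + h * h"
    by (simp add: distrib_left distrib_right PP Ph hP scaleR_2 add.assoc)
  have sq2: "(P - h) * (P - h) = P - scaleR 2 h + h * h"
    by (simp add: left_diff_distrib right_diff_distrib PP Ph hP scaleR_2 algebra_simps)
  have e2: "invol x * x = scaleR ((1+t)/2) ((P + h) * (P + h)) + scaleR ((1-t)/2) ((P - h) * (P - h))"
    unfolding e1 sq1 sq2 by (rule combo_id[symmetric])
  have b1: "norm ((P + h) * (P + h)) \<le> 1"
    using order_trans[OF norm_mult_ineq mult_le_one[OF n1 norm_ge_zero n1]] .
  have b2: "norm ((P - h) * (P - h)) \<le> 1"
    using order_trans[OF norm_mult_ineq mult_le_one[OF n2 norm_ge_zero n2]] .
  have "norm (invol x * x) \<le> \<bar>(1+t)/2\<bar> * norm ((P + h) * (P + h)) + \<bar>(1-t)/2\<bar> * norm ((P - h) * (P - h))"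
    unfolding e2 by (metis norm_scaleR norm_triangle_ineq)
  also have "\<dots> \<le> \<bar>(1+t)/2\<bar> * 1 + \<bar>(1-t)/2\<bar> * 1"
    by (intro add_mono mult_left_mono b1 b2) auto
  also have "\<dots> = 1" using t1 by (auto simp: field_simps)
  finally have "norm x ^ 2 \<le> 1" using cstar_identity[of x] by simp
  then have "norm x \<le> 1" by (simp add: power_le_one_iff)
  then show ?thesis by (simp add: x_def)
qed


lemma root_pow_eq1:
  assumes N: "N \<ge> 1" and e: "cis (2 * pi / real N) ^ m = 1"
  shows "N dvd m"
proof -
  have "cis (real m * (2 * pi / real N)) = 1" using e by (simp add: DeMoivre)
  then have "cos (real m * (2 * pi / real N)) = 1" by (metis cis.sel(1) one_complex.sel(1))
  then obtain n :: int where n: "real m * (2 * pi / real N) = of_int n * 2 * pi"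
    using cos_one_2pi_int by blast
  then have "real m = of_int n * real N" using N pi_gt_zero by (simp add: field_simps)
  then have "int m = n * int N" by (metis of_int_eq_iff of_int_mult of_int_of_nat_eq)
  then have "int N dvd int m" by simp
  then show ?thesis by simp
qed

lemma root_sum:
  assumes N: "N \<ge> 1"
  shows "(\<Sum>k<N. (cis (2 * pi / real N) ^ m) ^ k) = (if N dvd m then of_nat N else 0)"
proof -
  define q where "q = cis (2 * pi / real N) ^ m"
  have wN: "cis (2 * pi / real N) ^ N = 1" using N by (simp add: DeMoivre)
  have "q ^ N = (cis (2 * pi / real N) ^ N) ^ m" unfolding q_def by (metis power_mult mult.commute)
  then have qN: "q ^ N = 1" by (simp add: wN)
  show ?thesis
  proof (cases "N dvd m")
    case True
    then obtain c where "m = N * c" by blast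
    then have "q = 1" unfolding q_def by (simp add: power_mult wN)
    then show ?thesis using True unfolding q_def[symmetric] by simp
  next
    case False
    then have "q \<noteq> 1" using root_pow_eq1[OF N] unfolding q_def by blast
    then have "(\<Sum>k<N. q ^ k) = (q ^ N - 1) / (q - 1)" by (rule geometric_sum)
    then show ?thesis using False qN unfolding q_def[symmetric] by simp
  qed
qed

lemma lemmaX:
  fixes P h :: "'a::cstar_algebra"
  assumes PP: "P * P = P" and iP: "invol P = P" and ih: "invol h = h"
    and Ph: "P * h = h" and hP: "h * P = h"
    and n1: "norm (P + h) \<le> 1" and n2: "norm (P - h) \<le> 1"
  shows "h = 0"
proof -
  have nP: "norm P \<le> 1" using norm_proj[OF PP iP] .
  have bound: "real N * real N * norm h \<le> real N" if N2: "N \<ge> 2" for N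
  proof -
    define \<omega> where "\<omega> = cis (2 * pi / real N)"
    define F where "F k = pw P (P + scaleC (\<omega> ^ k) h) N" for k
    have cw: "cmod (\<omega> ^ k) = 1" for k by (simp add: \<omega>_def norm_power)
    have nF: "norm (F k) \<le> 1" for k
      unfolding F_def
      by (rule pw_norm[OF nP rot_bound[OF PP iP ih Ph hP n1 n2 cw]])
    have Fexp: "F k = (\<Sum>j\<le>N. scaleC (of_nat (N choose j) * (\<omega> ^ j) ^ k) (pw P h j))" for k
    proof -
      have Pa: "P * scaleC (\<omega> ^ k) h = scaleC (\<omega> ^ k) h" by (simp add: mult_scaleC_right Ph)
      have "F k = (\<Sum>j\<le>N. scaleR (real (N choose j)) (pw P (scaleC (\<omega> ^ k) h) j))"
        unfolding F_def by (rule pw_binom[OF PP Pa])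
      also have "\<dots> = (\<Sum>j\<le>N. scaleC (of_nat (N choose j) * (\<omega> ^ j) ^ k) (pw P h j))"
        by (intro sum.cong refl)
           (simp add: pw_scaleC scaleC_of_real[symmetric] scaleC_scaleC power_mult[symmetric] mult.commute)
      finally show ?thesis .
    qed
    define S where "S = (\<Sum>k<N. scaleC ((\<omega> ^ (N - 1)) ^ k) (F k))"
    have "norm S \<le> (\<Sum>k<N. norm (scaleC ((\<omega> ^ (N - 1)) ^ k) (F k)))"
      unfolding S_def by (rule norm_sum)
    also have "\<dots> = (\<Sum>k<N. norm (F k))"
      by (simp add: norm_scaleC norm_power \<omega>_def)
    also have "\<dots> \<le> (\<Sum>k<N. 1)" by (intro sum_mono nF)
    finally have nS: "norm S \<le> real N" by simp
    have pe: "(\<omega> ^ (N - 1 + j)) ^ k = (\<omega> ^ (N-1)) ^ k * (\<omega> ^ j) ^ k" for j k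
      by (simp only: power_add power_mult_distrib)
    have "S = (\<Sum>k<N. \<Sum>j\<le>N. scaleC (of_nat (N choose j) * (\<omega> ^ (N - 1 + j)) ^ k) (pw P h j))"
      unfolding S_def Fexp pe
      by (intro sum.cong refl)
         (simp add: scaleC_sum_right scaleC_scaleC mult.commute mult.left_commute)
    also have "\<dots> = (\<Sum>j\<le>N. \<Sum>k<N. scaleC (of_nat (N choose j) * (\<omega> ^ (N - 1 + j)) ^ k) (pw P h j))"
      by (rule sum.swap)
    also have "\<dots> = (\<Sum>j\<le>N. scaleC (of_nat (N choose j) * (\<Sum>k<N. (\<omega> ^ (N - 1 + j)) ^ k)) (pw P h j))"
      by (simp add: scaleC_sum_left sum_distrib_left)
    also have "\<dots> = (\<Sum>j\<le>N. scaleC (of_nat (N choose j) * (if N dvd (N - 1 + j) then of_nat N else 0)) (pw P h j))"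
      using N2 by (simp add: root_sum \<omega>_def)
    also have "\<dots> = (\<Sum>j\<in>{1}. scaleC (of_nat (N choose j) * (if N dvd (N - 1 + j) then of_nat N else 0)) (pw P h j))"
    proof (rule sum.mono_neutral_right)
      show "{1} \<subseteq> {..N}" using N2 by auto
      show "\<forall>j\<in>{..N} - {1}. scaleC (of_nat (N choose j) * (if N dvd (N - 1 + j) then of_nat N else 0)) (pw P h j) = 0"
      proof
        fix j assume j: "j \<in> {..N} - {1}"
        have "\<not> N dvd (N - 1 + j)"
        proof
          assume d: "N dvd (N - 1 + j)"
          show False
          proof (cases "j = 0")
            case True
            then have "N dvd (N - 1)" using d by simp
            moreover have "0 < N - 1" "N - 1 < N" using N2 by auto
            ultimately show False using nat_dvd_not_less by blast
          next
            case False
            then have "N - 1 + j = N + (j - 1)" using N2 by simp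
            then have "N dvd (j - 1)" using d by (simp add: dvd_add_right_iff)
            moreover have "0 < j - 1" "j - 1 < N" using j False by auto
            ultimately show False using nat_dvd_not_less by blast
          qed
        qed
        then show "scaleC (of_nat (N choose j) * (if N dvd (N - 1 + j) then of_nat N else 0)) (pw P h j) = 0"
          by (simp add: scaleC_zero_left)
      qed
    qed simp
    also have "\<dots> = scaleC (of_nat N * of_nat N) h" using N2 by (simp add: hP)
    finally have "S = scaleC (of_nat N * of_nat N) h" .
    then have "norm S = real N * real N * norm h" by (simp add: norm_scaleC norm_mult)
    then show ?thesis using nS by simp
  qed
  show "h = 0"
  proof (rule ccontr)
    assume "h \<noteq> 0"
    then have hp: "norm h > 0" by simp
    obtain N :: nat where N: "1 / norm h + 2 < real N" using reals_Archimedean2 by blast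
    have ip: "0 < 1 / norm h" using hp by simp
    then have "2 < real N" using N by linarith
    then have N2: "N \<ge> 2" by simp
    have "real N * (real N * norm h) \<le> real N * 1" using bound[OF N2] by (simp add: mult.assoc)
    then have "real N * norm h \<le> 1" using N2 by simp
    moreover have "real N * norm h > 1"
    proof -
      have "1 / norm h < real N" using N ip by linarith
      then show ?thesis using hp by (simp add: divide_less_eq)
    qed
    ultimately show False by simp
  qed
qed


lemma proj_compl:
  fixes U E :: "'a::cstar_algebra"
  assumes "U * U = U" "invol U = U" "E * E = E" "invol E = E" "U * E = E" "E * U = E"
  shows "(U - E) * (U - E) = U - E" "invol (U - E) = U - E"
  using assms by (simp_all add: left_diff_distrib right_diff_distrib invol_diff)

lemma final_step: fixes Eb P :: "'a::cstar_algebra"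
  assumes iE: "invol Eb = Eb" and iP: "invol P = P" and EE: "Eb*Eb = Eb" and T: "P * Eb * P = 0"
  shows "P * Eb = 0"
proof -
  have ebT: "invol (Eb * P) * (Eb * P) = P * Eb * P"
    by (simp add: invol_mult iP iE mult.assoc) (metis EE mult.assoc)
  have "norm (Eb * P) ^ 2 = norm (invol (Eb * P) * (Eb * P))" by (rule cstar_identity[symmetric])
  also have "\<dots> = 0" by (simp only: ebT T norm_zero)
  finally have "norm (Eb * P) ^ 2 = 0" .
  then have "Eb * P = 0" by simp
  then have "invol (Eb * P) = 0" by (simp add: invol_zero)
  then show ?thesis by (simp add: invol_mult iP iE)
qed

lemma orth:
  fixes E :: "'i \<Rightarrow> 'a::cstar_algebra"
  assumes fin: "finite I" and UU: "U * U = U" and iU: "invol U = U"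
    and EE: "\<And>i. i \<in> I \<Longrightarrow> E i * E i = E i"
    and iE: "\<And>i. i \<in> I \<Longrightarrow> invol (E i) = E i"
    and UE: "\<And>i. i \<in> I \<Longrightarrow> U * E i = E i"
    and sumE: "(\<Sum>i\<in>I. E i) = U"
    and a: "a \<in> I" and b: "b \<in> I" and ab: "a \<noteq> b"
  shows "E a * E b = 0"
proof -
  have EU: "E i * U = E i" if "i \<in> I" for i
  proof -
    have "invol (U * E i) = invol (E i)" using UE[OF that] by simp
    then show ?thesis by (simp add: invol_mult iU iE[OF that])
  qed
  define P where "P = E a"
  have PP: "P * P = P" and iP: "invol P = P" and PU: "P * U = P" and UP: "U * P = P"
    using EE[OF a] iE[OF a] EU[OF a] UE[OF a] by (simp_all add: P_def)
  define T where "T k = P * E k * P" for k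
  have "U = P + (\<Sum>k\<in>I - {a}. E k)"
    using sum.remove[OF fin a, of E] sumE by (simp add: P_def)
  then have "(\<Sum>k\<in>I - {a}. E k) = U - P" by (metis add_diff_cancel_left')
  moreover have "(\<Sum>k\<in>I - {a}. T k) = P * (\<Sum>k\<in>I - {a}. E k) * P"
    by (simp add: T_def sum_distrib_left sum_distrib_right)
  ultimately have "(\<Sum>k\<in>I - {a}. T k) = P * (U - P) * P" by simp
  also have "\<dots> = 0" by (simp add: left_diff_distrib right_diff_distrib PU PP)
  finally have sT: "(\<Sum>k\<in>I - {a}. T k) = 0" .
  define R where "R = I - {a} - {b}"
  have finR: "finite R" using fin by (simp add: R_def)
  have bI: "b \<in> I - {a}" using b ab by simp
  have sR: "(\<Sum>k\<in>R. T k) = - T b"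
    using sum.remove[OF _ bI, of T] sT fin unfolding R_def by (simp add: eq_neg_iff_add_eq_0 add.commute)
  have nPr: "norm P \<le> 1" by (rule norm_proj[OF PP iP])
  have nT: "norm (P - T k) \<le> 1" if "k \<in> I" for k
  proof -
    have nUE: "norm (U - E k) \<le> 1"
      by (rule norm_proj[OF proj_compl[OF UU iU EE[OF that] iE[OF that] UE[OF that] EU[OF that]]])
    have eq: "P - T k = P * (U - E k) * P"
      by (simp add: T_def left_diff_distrib right_diff_distrib PU PP)
    have "norm (P * (U - E k) * P) \<le> norm (P * (U - E k)) * norm P" by (rule norm_mult_ineq)
    moreover have "norm (P * (U - E k)) \<le> norm P * norm (U - E k)" by (rule norm_mult_ineq)
    moreover have "norm P * norm (U - E k) \<le> 1" using nPr nUE by (simp add: mult_le_one)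
    ultimately have "norm (P * (U - E k) * P) \<le> 1"
      using nPr by (meson dual_order.trans mult_le_one norm_ge_zero)
    then show ?thesis by (simp add: eq)
  qed
  define c where "c = real (card R)"
  have "(\<Sum>k\<in>R. P - T k) = scaleR c P + T b"
    by (simp add: sum_subtractf sR c_def sum_constant_scaleR)
  moreover have "norm (\<Sum>k\<in>R. P - T k) \<le> c"
  proof -
    have "norm (\<Sum>k\<in>R. P - T k) \<le> (\<Sum>k\<in>R. norm (P - T k))" by (rule norm_sum)
    also have "\<dots> \<le> (\<Sum>k\<in>R. 1)" by (intro sum_mono nT) (auto simp: R_def)
    finally show ?thesis by (simp add: c_def)
  qed
  ultimately have ncb: "norm (scaleR c P + T b) \<le> c" by simp
  have Tb0: "T b = 0"
  proof (cases "R = {}")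
    case True
    then show ?thesis using sR by simp
  next
    case False
    then have cpos: "c > 0" using finR by (simp add: c_def card_gt_0_iff)
    define h where "h = scaleR (1/c) (T b)"
    have ih: "invol h = h" by (simp add: h_def invol_scaleR T_def invol_mult iP iE[OF b] mult.assoc)
    have Ph: "P * h = h" by (simp add: h_def T_def mult.assoc[symmetric] PP)
    have hP: "h * P = h" by (simp add: h_def T_def mult.assoc PP)
    have "P + h = scaleR (1/c) (scaleR c P + T b)" using cpos by (simp add: h_def scaleR_add_right)
    then have n1: "norm (P + h) \<le> 1" using ncb cpos by (simp add: divide_le_eq)
    have eqm: "P - h = scaleR (1 - 1/c) P + scaleR (1/c) (P - T b)"
      by (simp add: h_def scaleR_diff_right scaleR_diff_left)
    have c1: "c \<ge> 1" using cpos by (simp add: c_def)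
    have "norm (P - h) \<le> norm (scaleR (1 - 1/c) P) + norm (scaleR (1/c) (P - T b))"
      unfolding eqm by (rule norm_triangle_ineq)
    also have "\<dots> = (1 - 1/c) * norm P + (1/c) * norm (P - T b)"
      using c1 by simp
    also have "\<dots> \<le> (1 - 1/c) * 1 + (1/c) * 1"
    proof (rule add_mono)
      show "(1 - 1/c) * norm P \<le> (1 - 1/c) * 1"
        using c1 nPr by (intro mult_left_mono) auto
      show "(1/c) * norm (P - T b) \<le> (1/c) * 1"
        using cpos nT[OF b] by (intro mult_left_mono) auto
    qed
    also have "\<dots> = 1" by simp
    finally have n2: "norm (P - h) \<le> 1" .
    have "h = 0" by (rule lemmaX[OF PP iP ih Ph hP n1 n2])
    then show ?thesis using cpos by (simp add: h_def)
  qed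
  have "P * E b = 0" using final_step[OF iE[OF b] iP EE[OF b]] Tb0 by (simp add: T_def)
  then show ?thesis by (simp add: P_def)
qed




lemma transversal_finite:
  fixes Gr :: "'g monoid" and Hr :: "'h monoid"
  assumes grG: "group Gr" and grH: "group Hr" and hm: "al \<in> hom Hr Gr"
    and tr: "left_transversal Gr (al ` carrier Hr) T"
    and fc: "finite (left_cosets Gr (al ` carrier Hr))"
  shows "finite T"
proof -
  let ?K = "al ` carrier Hr"
  have TG: "T \<subseteq> carrier Gr" and uq: "\<forall>a\<in>carrier Gr. \<exists>!t. t \<in> T \<and> t \<in> a <#\<^bsub>Gr\<^esub> ?K"
    using tr unfolding left_transversal_def by auto
  have "al \<one>\<^bsub>Hr\<^esub> = \<one>\<^bsub>Gr\<^esub>" by (rule hom_one[OF hm grH grG])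
  moreover have "\<one>\<^bsub>Hr\<^esub> \<in> carrier Hr" using grH by (simp add: group.is_monoid monoid.one_closed)
  ultimately have oneK: "\<one>\<^bsub>Gr\<^esub> \<in> ?K" by force
  have self: "t \<in> t <#\<^bsub>Gr\<^esub> ?K" if "t \<in> carrier Gr" for t
  proof -
    have "t \<otimes>\<^bsub>Gr\<^esub> \<one>\<^bsub>Gr\<^esub> = t" using grG that by (simp add: group.is_monoid monoid.r_one)
    then show ?thesis unfolding l_coset_def using oneK by force
  qed
  have inj: "inj_on (\<lambda>t. t <#\<^bsub>Gr\<^esub> ?K) T"
  proof (rule inj_onI)
    fix t1 t2 assume t1: "t1 \<in> T" and t2: "t2 \<in> T" and eq: "t1 <#\<^bsub>Gr\<^esub> ?K = t2 <#\<^bsub>Gr\<^esub> ?K"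
    have c1: "t1 \<in> carrier Gr" using t1 TG by auto
    have "t2 \<in> t1 <#\<^bsub>Gr\<^esub> ?K" using eq self[of t2] t2 TG by auto
    moreover have "t1 \<in> t1 <#\<^bsub>Gr\<^esub> ?K" using self[OF c1] .
    ultimately show "t1 = t2" using uq c1 t1 t2 by blast
  qed
  have "(\<lambda>t. t <#\<^bsub>Gr\<^esub> ?K) ` T \<subseteq> left_cosets Gr ?K" using TG unfolding left_cosets_def by auto
  then have "finite ((\<lambda>t. t <#\<^bsub>Gr\<^esub> ?K) ` T)" using fc finite_subset by blast
  then show ?thesis using inj finite_image_iff by blast
qed

locale gfam =
  fixes r s :: "'e \<Rightarrow> 'v" and bar :: "'e \<Rightarrow> 'e"
    and G :: "'v \<Rightarrow> 'g monoid" and H :: "'e \<Rightarrow> 'h monoid"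
    and alpha :: "'e \<Rightarrow> 'h \<Rightarrow> 'g" and Sig :: "'e \<Rightarrow> 'g set"
    and u :: "'v \<Rightarrow> 'g \<Rightarrow> 'a::cstar_algebra" and sx :: "'e \<Rightarrow> 'a"
  assumes gog: "graph_of_groups r s bar G H alpha"
    and lf: "locally_finite_gog r G H alpha"
    and trans: "\<And>e. left_transversal (G (r e)) (alpha e ` carrier (H e)) (Sig e)"
    and one_in: "\<And>e. \<one>\<^bsub>G (r e)\<^esub> \<in> Sig e"
    and fam: "G_family r s bar G H alpha Sig u sx"
begin

lemma grp: "group (G x)" using gog unfolding graph_of_groups_def by auto
lemma grpH: "group (H e)" using gog unfolding graph_of_groups_def by auto
lemma al_hom: "alpha e \<in> hom (H e) (G (r e))" using gog unfolding graph_of_groups_def by auto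
lemma bb: "bar (bar e) = e" using gog unfolding graph_of_groups_def by auto
lemma rs: "r e = s (bar e)" using gog unfolding graph_of_groups_def by auto
lemma uhom: "g \<in> carrier (G x) \<Longrightarrow> h \<in> carrier (G x) \<Longrightarrow> u x (g \<otimes>\<^bsub>G x\<^esub> h) = u x g * u x h"
  using fam unfolding G_family_def by auto
lemma uinv: "g \<in> carrier (G x) \<Longrightarrow> u x (inv\<^bsub>G x\<^esub> g) = invol (u x g)"
  using fam unfolding G_family_def by auto
lemma pi: "sx e * invol (sx e) * sx e = sx e"
  using fam unfolding G_family_def by auto
lemma G1: "x \<noteq> y \<Longrightarrow> u x \<one>\<^bsub>G x\<^esub> * u y \<one>\<^bsub>G y\<^esub> = 0"
  using fam unfolding G_family_def by auto
lemma G3: "u (s e) \<one>\<^bsub>G (s e)\<^esub> = invol (sx e) * sx e + sx (bar e) * invol (sx (bar e))"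
  using fam unfolding G_family_def by auto

definition EE :: "'v \<Rightarrow> 'g \<times> 'e \<Rightarrow> 'a" where
  "EE x p = (case p of (\<mu>, f) \<Rightarrow> u x \<mu> * sx f * invol (sx f) * invol (u x \<mu>))"

lemma G4: "invol (sx e) * sx e =
   sum (EE (s e)) {(\<mu>, f). r f = s e \<and> \<mu> \<in> Sig f \<and> (\<mu>, f) \<noteq> (\<one>\<^bsub>G (s e)\<^esub>, bar e)}"
proof -
  have "(\<lambda>(\<mu>, f). u (s e) \<mu> * sx f * invol (sx f) * invol (u (s e) \<mu>)) = EE (s e)"
    by (auto simp: EE_def fun_eq_iff)
  then show ?thesis using fam unfolding G_family_def by auto
qed

abbreviation U where "U x \<equiv> u x \<one>\<^bsub>G x\<^esub>"

lemma one_c: "\<one>\<^bsub>G x\<^esub> \<in> carrier (G x)" using grp by (simp add: group.is_monoid monoid.one_closed)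

lemma U_idem: "U x * U x = U x"
  using uhom[OF one_c one_c, of x] grp by (simp add: group.is_monoid monoid.l_one one_c)

lemma U_sa: "invol (U x) = U x"
  using uinv[OF one_c, of x] grp by (simp add: group.is_monoid monoid.inv_one)

lemma u_U: "g \<in> carrier (G x) \<Longrightarrow> u x g * U x = u x g"
  using uhom[OF _ one_c, of g x] grp by (simp add: group.is_monoid monoid.r_one)

lemma U_u: "g \<in> carrier (G x) \<Longrightarrow> U x * u x g = u x g"
  using uhom[OF one_c, of g x] grp by (simp add: group.is_monoid monoid.l_one)

lemma ui_u: "g \<in> carrier (G x) \<Longrightarrow> invol (u x g) * u x g = U x"
  using uhom[of "inv\<^bsub>G x\<^esub> g" x g] uinv[of g x] grp by (simp add: group.inv_closed group.l_inv)

lemma ui_U: "g \<in> carrier (G x) \<Longrightarrow> invol (u x g) * U x = invol (u x g)"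
  using U_u[of g x] by (metis U_sa invol_mult)

abbreviation Pe where "Pe e \<equiv> invol (sx e) * sx e"
abbreviation Qe where "Qe e \<equiv> sx e * invol (sx e)"

lemma pi': "invol (sx e) * sx e * invol (sx e) = invol (sx e)"
proof -
  have "invol (sx e * invol (sx e) * sx e) = invol (sx e)" using pi by simp
  then show ?thesis by (simp add: invol_mult invol_invol mult.assoc)
qed

lemma Pe_idem: "Pe e * Pe e = Pe e" by (simp add: mult.assoc[symmetric] pi')
lemma Pe_sa: "invol (Pe e) = Pe e" by (simp add: invol_mult invol_invol)
lemma Qe_idem: "Qe e * Qe e = Qe e" by (simp add: mult.assoc[symmetric] pi)
lemma Qe_sa: "invol (Qe e) = Qe e" by (simp add: invol_mult invol_invol)

lemma PQ0: "Pe e * Qe (bar e) = 0"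
proof (rule two_proj[OF Pe_idem Qe_idem])
  show "(Pe e + Qe (bar e)) * (Pe e + Qe (bar e)) = Pe e + Qe (bar e)"
    using U_idem[of "s e"] G3[of e] by simp
qed

lemma QP0: "Qe (bar e) * Pe e = 0"
proof -
  have "invol (Pe e * Qe (bar e)) = 0" using PQ0[of e] by (simp add: invol_zero)
  then show ?thesis by (simp add: invol_mult invol_invol mult.assoc)
qed

lemma UP: "U (s e) * Pe e = Pe e"
  by (simp only: G3 distrib_right Pe_idem QP0) simp
lemma PU: "Pe e * U (s e) = Pe e"
  by (simp only: G3 distrib_left Pe_idem PQ0) simp
lemma UQ: "U (s e) * Qe (bar e) = Qe (bar e)"
  by (simp only: G3 distrib_right Qe_idem PQ0) simp
lemma QU: "Qe (bar e) * U (s e) = Qe (bar e)"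
  by (simp only: G3 distrib_left Qe_idem QP0) simp
lemma UQr: "U (r e) * Qe e = Qe e"
  using UQ[of "bar e"] by (simp add: rs[symmetric] bb)
lemma QUr: "Qe e * U (r e) = Qe e"
  using QU[of "bar e"] by (simp add: rs[symmetric] bb)

lemma pi_r: "sx e * (invol (sx e) * sx e) = sx e" using pi by (simp add: mult.assoc)

lemma U_sx: "U (r e) * sx e = sx e"
proof -
  have "U (r e) * sx e = U (r e) * Qe e * sx e" by (simp add: mult.assoc pi_r)
  also have "\<dots> = sx e" by (simp add: UQr pi)
  finally show ?thesis .
qed

lemma sxi_U: "invol (sx e) * U (r e) = invol (sx e)"
  using U_sx[of e] by (metis U_sa invol_mult)

lemma ra1: "g \<in> carrier (G x) \<Longrightarrow> invol (u x g) * (u x g * X) = U x * X"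
  by (simp add: mult.assoc[symmetric] ui_u)
lemma ra2: "invol (sx f) * (U (r f) * X) = invol (sx f) * X"
  by (simp add: mult.assoc[symmetric] sxi_U)
lemma ra3: "invol (sx e) * (sx e * (invol (sx e) * X)) = invol (sx e) * X"
  by (simp add: mult.assoc[symmetric] pi')
lemma ra4: "U (r e) * (sx e * X) = sx e * X"
  by (simp add: mult.assoc[symmetric] U_sx)
lemma ra6: "g \<in> carrier (G x) \<Longrightarrow> U x * (u x g * X) = u x g * X"
  by (simp add: mult.assoc[symmetric] U_u)

lemmas RA = ra1 ra2 ra3 ra4 ra6 pi_r U_sx sxi_U

lemma E_idem: "\<mu> \<in> carrier (G (r f)) \<Longrightarrow> EE (r f) (\<mu>, f) * EE (r f) (\<mu>, f) = EE (r f) (\<mu>, f)"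
  by (simp add: EE_def mult.assoc RA)
lemma E_sa: "invol (EE x (\<mu>, f)) = EE x (\<mu>, f)"
  by (simp add: EE_def mult.assoc invol_mult invol_invol)
lemma U_E: "\<mu> \<in> carrier (G x) \<Longrightarrow> U x * EE x (\<mu>, f) = EE x (\<mu>, f)"
  by (simp add: EE_def mult.assoc RA)
lemma E_abs: "\<mu> \<in> carrier (G (r f)) \<Longrightarrow> EE (r f) (\<mu>, f) * (u (r f) \<mu> * sx f) = u (r f) \<mu> * sx f"
  by (simp add: EE_def mult.assoc RA)
lemma abs_E: "\<mu> \<in> carrier (G (r f)) \<Longrightarrow> invol (sx f) * invol (u (r f) \<mu>) * EE (r f) (\<mu>, f) = invol (sx f) * invol (u (r f) \<mu>)"
  by (simp add: EE_def mult.assoc RA)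
lemma E_one: "EE (r d) (\<one>\<^bsub>G (r d)\<^esub>, d) = Qe d"
  by (simp add: EE_def mult.assoc RA U_sa)

definition Iv :: "'v \<Rightarrow> ('g \<times> 'e) set" where
  "Iv x = {(\<mu>, f). r f = x \<and> \<mu> \<in> Sig f}"

lemma Sig_c: "\<mu> \<in> Sig f \<Longrightarrow> \<mu> \<in> carrier (G (r f))"
  using trans[of f] unfolding left_transversal_def by auto

lemma Sig_fin: "finite (Sig f)"
  using transversal_finite[OF grp grpH al_hom trans] lf unfolding locally_finite_gog_def by auto

lemma Iv_fin: "finite (Iv x)"
proof -
  have "Iv x \<subseteq> (\<Union>f\<in>{f. r f = x}. (\<lambda>\<mu>. (\<mu>, f)) ` Sig f)" by (auto simp: Iv_def)
  moreover have "finite (\<Union>f\<in>{f. r f = x}. (\<lambda>\<mu>. (\<mu>, f)) ` Sig f)"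
    using lf Sig_fin unfolding locally_finite_gog_def by auto
  ultimately show ?thesis using finite_subset by blast
qed

lemma rbe: "r (bar e) = s e" by (metis bb rs)

lemma sum_E: "sum (EE (r d)) (Iv (r d)) = U (r d)"
proof -
  have set: "{(\<mu>, f). r f = s (bar d) \<and> \<mu> \<in> Sig f \<and> (\<mu>, f) \<noteq> (\<one>\<^bsub>G (s (bar d))\<^esub>, bar (bar d))}
      = Iv (r d) - {(\<one>\<^bsub>G (r d)\<^esub>, d)}"
    by (auto simp: Iv_def rs[of d, symmetric] bb)
  have P: "Pe (bar d) = sum (EE (r d)) (Iv (r d) - {(\<one>\<^bsub>G (r d)\<^esub>, d)})"
    using G4[of "bar d"] unfolding set by (simp add: rs[of d, symmetric])
  have U: "U (r d) = Pe (bar d) + Qe d"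
    using G3[of "bar d"] by (simp add: rs[of d, symmetric] bb)
  have mem: "(\<one>\<^bsub>G (r d)\<^esub>, d) \<in> Iv (r d)" using one_in[of d] by (simp add: Iv_def)
  have "sum (EE (r d)) (Iv (r d)) = EE (r d) (\<one>\<^bsub>G (r d)\<^esub>, d) + sum (EE (r d)) (Iv (r d) - {(\<one>\<^bsub>G (r d)\<^esub>, d)})"
    by (rule sum.remove[OF Iv_fin mem])
  also have "\<dots> = Qe d + Pe (bar d)" by (simp only: E_one P)
  finally show ?thesis using U by (simp add: add.commute)
qed

lemma orthE:
  assumes p: "p \<in> Iv (r d)" and q: "q \<in> Iv (r d)" and pq: "p \<noteq> q"
  shows "EE (r d) p * EE (r d) q = 0"
proof (rule orth[OF Iv_fin U_idem U_sa _ _ _ sum_E p q pq])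
  fix i assume i: "i \<in> Iv (r d)"
  then obtain \<mu> f where i': "i = (\<mu>, f)" and rf: "r f = r d" and mu: "\<mu> \<in> Sig f" by (auto simp: Iv_def)
  have mc: "\<mu> \<in> carrier (G (r f))" by (rule Sig_c[OF mu])
  show "EE (r d) i * EE (r d) i = EE (r d) i" using E_idem[OF mc] by (simp add: i' rf)
  show "invol (EE (r d) i) = EE (r d) i" by (simp add: i' E_sa)
  show "U (r d) * EE (r d) i = EE (r d) i" using U_E[OF mc] by (simp add: i' rf)
qed

lemma part1:
  assumes g: "g \<in> Sig e" and h: "h \<in> Sig f"
  shows "invol (u (r e) g * sx e) * (u (r f) h * sx f) = (if e = f \<and> g = h then invol (sx e) * sx e else 0)"
proof -
  have gc: "g \<in> carrier (G (r e))" by (rule Sig_c[OF g])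
  have hc: "h \<in> carrier (G (r f))" by (rule Sig_c[OF h])
  have L: "invol (u (r e) g * sx e) * (u (r f) h * sx f) = invol (sx e) * (invol (u (r e) g) * u (r f) h) * sx f"
    by (simp add: invol_mult mult.assoc)
  show ?thesis
  proof (cases "r e = r f")
    case False
    have "invol (u (r e) g) * u (r f) h = invol (u (r e) g) * U (r e) * (U (r f) * u (r f) h)"
      by (simp add: ui_U[OF gc] U_u[OF hc])
    also have "\<dots> = invol (u (r e) g) * (U (r e) * U (r f)) * u (r f) h" by (simp add: mult.assoc)
    also have "\<dots> = 0" using G1[OF False] by simp
    finally have "invol (u (r e) g) * u (r f) h = 0" .
    then show ?thesis using L False by auto
  next
    case True
    show ?thesis
    proof (cases "e = f \<and> g = h")
      case True
      then have "e = f" "g = h" by auto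
      then show ?thesis using ra1[OF gc, of "sx e"] U_sx[of e] by (simp add: invol_mult mult.assoc)
    next
      case ne: False
      have pin: "(g, e) \<in> Iv (r e)" using g by (simp add: Iv_def)
      have qin: "(h, f) \<in> Iv (r e)" using h True by (simp add: Iv_def)
      have pq: "(g, e) \<noteq> (h, f)" using ne by auto
      have O: "EE (r e) (g, e) * EE (r e) (h, f) = 0" by (rule orthE[OF pin qin pq])
      have A1: "invol (sx e) * invol (u (r e) g) * EE (r e) (g, e) = invol (sx e) * invol (u (r e) g)"
        by (rule abs_E[OF gc])
      have A2: "EE (r e) (h, f) * (u (r e) h * sx f) = u (r e) h * sx f"
        using E_abs[OF hc] True by simp
      have "invol (u (r e) g * sx e) * (u (r f) h * sx f)
          = invol (sx e) * invol (u (r e) g) * (u (r e) h * sx f)"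
        using True by (simp add: invol_mult mult.assoc)
      also have "\<dots> = (invol (sx e) * invol (u (r e) g) * EE (r e) (g, e)) * (EE (r e) (h, f) * (u (r e) h * sx f))"
        by (simp only: A1 A2)
      also have "\<dots> = invol (sx e) * invol (u (r e) g) * (EE (r e) (g, e) * EE (r e) (h, f)) * (u (r e) h * sx f)"
        by (simp only: mult.assoc)
      also have "\<dots> = 0" by (simp add: O)
      finally have "invol (u (r e) g * sx e) * (u (r f) h * sx f) = 0" .
      then show ?thesis by (simp only: if_not_P[OF ne])
    qed
  qed
qed

lemma part2:
  assumes h: "h \<in> Sig f"
  shows "invol (sx e) * sx e * (u (r f) h * sx f)
           = (if r f = s e \<and> \<not> (f = bar e \<and> h = \<one>\<^bsub>G (r f)\<^esub>) then u (r f) h * sx f else 0)"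
proof -
  have hc: "h \<in> carrier (G (r f))" by (rule Sig_c[OF h])
  show ?thesis
  proof (cases "r f = s e")
    case False
    have "Pe e * (u (r f) h * sx f) = (Pe e * U (s e)) * ((U (r f) * u (r f) h) * sx f)"
      by (simp only: PU U_u[OF hc])
    also have "\<dots> = Pe e * U (s e) * (U (r f) * u (r f) h) * sx f" by (simp only: mult.assoc)
    also have "\<dots> = Pe e * (U (s e) * U (r f)) * u (r f) h * sx f" by (simp add: mult.assoc)
    also have "\<dots> = 0"
    proof -
      have "s e \<noteq> r f" using False by simp
      then have "U (s e) * U (r f) = 0" by (rule G1)
      then show ?thesis by simp
    qed
    finally show ?thesis using False by simp
  next
    case True
    show ?thesis
    proof (cases "f = bar e \<and> h = \<one>\<^bsub>G (r f)\<^esub>")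
      case T2: True
      then have fe: "f = bar e" and h1: "h = \<one>\<^bsub>G (r f)\<^esub>" by auto
      have "Pe e * (u (r f) h * sx f) = Pe e * sx (bar e)" by (simp add: fe h1 U_sx)
      also have "\<dots> = Pe e * Qe (bar e) * sx (bar e)" by (simp add: mult.assoc pi_r)
      also have "\<dots> = 0" by (simp add: PQ0)
      finally show ?thesis using T2 by simp
    next
      case F2: False
      have q1: "(\<one>\<^bsub>G (r (bar e))\<^esub>, bar e) \<in> Iv (r (bar e))" using one_in[of "bar e"] by (simp add: Iv_def)
      have q2: "(h, f) \<in> Iv (r (bar e))" using h True by (simp add: Iv_def rbe)
      have ne: "(\<one>\<^bsub>G (r (bar e))\<^esub>, bar e) \<noteq> (h, f)" using F2 by auto
      have O: "EE (r (bar e)) (\<one>\<^bsub>G (r (bar e))\<^esub>, bar e) * EE (r (bar e)) (h, f) = 0"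
        by (rule orthE[OF q1 q2 ne])
      have O': "Qe (bar e) * EE (r f) (h, f) = 0" using O True by (simp add: E_one[of "bar e", unfolded rbe] rbe)
      have Pd: "Pe e = U (s e) - Qe (bar e)" using G3[of e] by simp
      have "Pe e * (u (r f) h * sx f) = U (s e) * (u (r f) h * sx f) - Qe (bar e) * (u (r f) h * sx f)"
        by (simp add: Pd left_diff_distrib)
      also have "U (s e) * (u (r f) h * sx f) = u (r f) h * sx f"
        using U_u[OF hc] True by (simp add: mult.assoc[symmetric])
      also have "Qe (bar e) * (u (r f) h * sx f) = Qe (bar e) * (EE (r f) (h, f) * (u (r f) h * sx f))"
        by (simp only: E_abs[OF hc])
      also have "\<dots> = 0" by (simp only: mult.assoc[symmetric] O') simp
      finally show ?thesis using True F2 by simp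
    qed
  qed
qed

end


theorem lemma4p2:
  fixes r s :: "'e \<Rightarrow> 'v" and bar :: "'e \<Rightarrow> 'e"
    and G :: "'v \<Rightarrow> 'g monoid" and H :: "'e \<Rightarrow> 'h monoid"
    and alpha :: "'e \<Rightarrow> 'h \<Rightarrow> 'g" and Sig :: "'e \<Rightarrow> 'g set"
    and u :: "'v \<Rightarrow> 'g \<Rightarrow> 'a::cstar_algebra" and sx :: "'e \<Rightarrow> 'a"
  assumes gog: "graph_of_groups r s bar G H alpha"
    and lf: "locally_finite_gog r G H alpha"
    and ns: "nonsingular_gog r G H alpha"
    and trans: "\<And>e. left_transversal (G (r e)) (alpha e ` carrier (H e)) (Sig e)"
    and one_in: "\<And>e. \<one>\<^bsub>G (r e)\<^esub> \<in> Sig e"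
    and fam: "G_family r s bar G H alpha Sig u sx"
    and g: "g \<in> Sig e" and h: "h \<in> Sig f"
  shows "invol (u (r e) g * sx e) * (u (r f) h * sx f)
           = (if e = f \<and> g = h then invol (sx e) * sx e else 0)
         \<and> invol (sx e) * sx e * (u (r f) h * sx f)
           = (if r f = s e \<and> \<not> (f = bar e \<and> h = \<one>\<^bsub>G (r f)\<^esub>) then u (r f) h * sx f else 0)"
proof -
  interpret L: gfam r s bar G H alpha Sig u sx
    by (rule gfam.intro) (fact gog lf trans one_in fam)+
  show ?thesis by (rule conjI[OF L.part1[OF g h] L.part2[OF h]])
qed

end
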